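(* Assume that each $f_m^j$ is convex and $L$-smooth and that $f$ is $\mu$-strongly convex ($\mu>0$). In the setting described in the context, for every meta-epoch $t$ and every $\theta>0$, $$-2\theta\Big\langle\frac1R\sum_{r=0}^{R-1}\frac1C\sum_{m\in S_t^{\lambda_r}}\frac1N\sum_{j=0}^{N-1}\nabla f_m^{\pi_m^j}(x^{r,j}_{m,t}),\,x_t-x_\star\Big\rangle\le-\frac{\theta\mu}{2}\|x_t-x_\star\|^2-\theta\big(f(x_t)-f(x_\star)\big)+\theta LV_t,$$ where $V_t=\frac{1}{RCN}\sum_{r=0}^{R-1}\sum_{m\in S_t^{\lambda_r}}\sum_{j=0}^{N-1}\|x_t-x^{r,j}_{m,t}\|^2$.
   Context: Setting. There are $M$ clients, each holding $N$ data points. For $m\in[M]$ and $j\in\{0,\dots,N-1\}$, $f_m^j:\mathbb{R}^d\to\mathbb{R}$ is differentiable. Define $f_m=\frac1N\sum_j f_m^j$ and $f=\frac1M\sum_m f_m$, and let $x_\star$ be the minimizer of $f$. $L$-smooth means the gradient is $L$-Lipschitz. $\mu$-strong convexity means $\langle\nabla h(x),y-x\rangle\le-(h(x)-h(y)+\frac\mu2\|x-y\|^2)$ for all $x,y$. Algorithm RR-CLI. Let $C$ be a cohort size with $M=CR$, and let $\gamma,\eta>0$. In meta-epoch $t$: - The clients are partitioned into $R$ disjoint cohorts of size $C$, taken in order $S_t^{\lambda_0},\dots,S_t^{\lambda_{R-1}}$. - Each client $m$ has a permutation $\pi_m=(\pi_m^0,\dots,\pi_m^{N-1})$ of its data indices.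 - Set $x_t^0=x_t$. For $r=0,\dots,R-1$ and $m\in S_t^{\lambda_r}$, set $x^{r,0}_{m,t}=x^r_t$ and $x^{r,j+1}_{m,t}=x^{r,j}_{m,t}-\gamma\nabla f_m^{\pi_m^j}(x^{r,j}_{m,t})$ for $j=0,\dots,N-1$. - The server sets $x^{r+1}_t=x^r_t-\eta\frac1C\sum_{m\in S_t^{\lambda_r}}\frac{x^r_t-x^{r,N}_{m,t}}{\gamma N}$. *)

theory Defs
  imports "HOL-Analysis.Analysis"
begin

text \<open>Local steps of client m in one cohort round:
  loc_iter gamma G p m x j = x^{r,j}_{m,t}, where x = x^r_t is the round's
  starting point, p = pi_m is the client's data permutation (for this epoch),
  and G m i is the gradient of f_m^i.\<close>
primrec loc_iter :: "real \<Rightarrow> (nat \<Rightarrow> nat \<Rightarrow> 'a::real_vector \<Rightarrow> 'a) \<Rightarrow> (nat \<Rightarrow> nat) \<Rightarrow> nat \<Rightarrow> 'a \<Rightarrow> nat \<Rightarrow> 'a" where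
  "loc_iter \<gamma> G p m x 0 = x"
| "loc_iter \<gamma> G p m x (Suc j) =
     loc_iter \<gamma> G p m x j - \<gamma> *\<^sub>R G m (p j) (loc_iter \<gamma> G p m x j)"

text \<open>Server iterates within one meta-epoch: cohort_iter ... S pi x r = x^r_t,
  where x = x_t = x^0_t, S r is the r-th cohort S_t^{lambda_r}, pi m = pi_m.\<close>
primrec cohort_iter :: "real \<Rightarrow> real \<Rightarrow> nat \<Rightarrow> nat \<Rightarrow> (nat \<Rightarrow> nat \<Rightarrow> 'a::real_vector \<Rightarrow> 'a)
    \<Rightarrow> (nat \<Rightarrow> nat set) \<Rightarrow> (nat \<Rightarrow> nat \<Rightarrow> nat) \<Rightarrow> 'a \<Rightarrow> nat \<Rightarrow> 'a" where
  "cohort_iter \<gamma> \<eta> C N G S \<pi> x 0 = x"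
| "cohort_iter \<gamma> \<eta> C N G S \<pi> x (Suc r) =
     cohort_iter \<gamma> \<eta> C N G S \<pi> x r
     - \<eta> *\<^sub>R ((1 / real C) *\<^sub>R
         (\<Sum>m\<in>S r. (1 / (\<gamma> * real N)) *\<^sub>R
            (cohort_iter \<gamma> \<eta> C N G S \<pi> x r
             - loc_iter \<gamma> G (\<pi> m) m (cohort_iter \<gamma> \<eta> C N G S \<pi> x r) N)))"

text \<open>Outer iterates x_t of RR-CLI: S t r is the r-th cohort of meta-epoch t,
  \<pi> t m the permutation of client m in meta-epoch t.\<close>
primrec rrcli :: "real \<Rightarrow> real \<Rightarrow> nat \<Rightarrow> nat \<Rightarrow> nat \<Rightarrow> (nat \<Rightarrow> nat \<Rightarrow> 'a::real_vector \<Rightarrow> 'a)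
    \<Rightarrow> (nat \<Rightarrow> nat \<Rightarrow> nat set) \<Rightarrow> (nat \<Rightarrow> nat \<Rightarrow> nat \<Rightarrow> nat) \<Rightarrow> 'a \<Rightarrow> nat \<Rightarrow> 'a" where
  "rrcli \<gamma> \<eta> C R N G S \<pi> x0 0 = x0"
| "rrcli \<gamma> \<eta> C R N G S \<pi> x0 (Suc t) =
     cohort_iter \<gamma> \<eta> C N G (S t) (\<pi> t) (rrcli \<gamma> \<eta> C R N G S \<pi> x0 t) R"

end

theory Submission
  imports Defs "HOL-Analysis.Analysis"
begin

lemma dline:
  fixes F :: "'a::real_inner \<Rightarrow> real"
  assumes "\<And>z. GDERIV F z :> G z"
  shows "((\<lambda>u. F (y + u *\<^sub>R d)) has_real_derivative (d \<bullet> G (y + u *\<^sub>R d))) (at u)"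
proof -
  have l: "((\<lambda>u. y + u *\<^sub>R d) has_derivative (\<lambda>u. u *\<^sub>R d)) (at u)"
    by (auto intro!: derivative_eq_intros)
  have "((\<lambda>u. F (y + u *\<^sub>R d)) has_derivative (\<lambda>h. (h *\<^sub>R d) \<bullet> G (y + u *\<^sub>R d))) (at u)"
    using has_derivative_compose[OF l assms[of "y + u *\<^sub>R d", unfolded gderiv_def]] .
  then show ?thesis unfolding has_field_derivative_def
    by (rule has_derivative_eq_rhs) (auto simp: fun_eq_iff)
qed

lemma descent:
  fixes F :: "'a::real_inner \<Rightarrow> real"
  assumes d: "\<And>z. GDERIV F z :> G z" and lip: "\<And>a b. norm (G a - G b) \<le> L * norm (a - b)"
  shows "F x \<le> F y + G y \<bullet> (x - y) + L / 2 * (norm (x - y))\<^sup>2"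
proof -
  define d where "d = x - y"
  define h where "h = (\<lambda>s. F (y + s *\<^sub>R d) - s * (d \<bullet> G y) - L / 2 * s^2 * (norm d)^2)"
  have "h 1 \<le> h 0"
  proof (rule DERIV_nonpos_imp_nonincreasing[of 0 1 h])
    fix s :: real assume s: "0 \<le> s" "s \<le> 1"
    have D: "(h has_real_derivative (d \<bullet> G (y + s *\<^sub>R d) - d \<bullet> G y - L * s * (norm d)^2)) (at s)"
    proof -
      have a: "((\<lambda>s. s * (d \<bullet> G y) + L / 2 * s^2 * (norm d)^2) has_real_derivative (d \<bullet> G y + L * s * (norm d)^2)) (at s)"
        by (auto intro!: derivative_eq_intros simp: algebra_simps)
      have "((\<lambda>s. F (y + s *\<^sub>R d) - (s * (d \<bullet> G y) + L / 2 * s^2 * (norm d)^2)) has_real_derivative (d \<bullet> G (y + s *\<^sub>R d) - (d \<bullet> G y + L * s * (norm d)^2))) (at s)"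
        by (rule DERIV_diff[OF dline[OF d] a])
      then show ?thesis unfolding h_def by (simp add: algebra_simps)
    qed
    have "d \<bullet> G (y + s *\<^sub>R d) - d \<bullet> G y = d \<bullet> (G (y + s *\<^sub>R d) - G y)" by (simp add: inner_diff_right)
    also have "\<dots> \<le> norm d * norm (G (y + s *\<^sub>R d) - G y)" by (rule norm_cauchy_schwarz)
    also have "\<dots> \<le> norm d * (L * norm (s *\<^sub>R d))"
      using lip[of "y + s *\<^sub>R d" y] by (intro mult_left_mono) auto
    also have "\<dots> = L * s * (norm d)^2" using s by (simp add: power2_eq_square)
    finally show "\<exists>y. (h has_real_derivative y) (at s) \<and> y \<le> 0" using D by auto
  qed simp
  then show ?thesis unfolding h_def d_def by (simp add: inner_commute algebra_simps)
qed

lemma tangent: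
  fixes F :: "'a::real_inner \<Rightarrow> real"
  assumes d: "\<And>z. GDERIV F z :> G z" and cv: "convex_on UNIV F"
  shows "F y + G y \<bullet> (x - y) \<le> F x"
proof (rule ccontr)
  assume nt: "\<not> ?thesis"
  define dd where "dd = x - y"
  define c where "c = F x - F y"
  have gt: "dd \<bullet> G y - c > 0" using nt by (simp add: dd_def c_def inner_commute)
  define psi where "psi = (\<lambda>u. F (y + u *\<^sub>R dd) - u * c)"
  have "(psi has_real_derivative (dd \<bullet> G y - c)) (at 0)"
    unfolding psi_def using dline[OF d, of y dd 0]
    by (auto intro!: derivative_eq_intros)
  from DERIV_pos_inc_right[OF this gt] obtain e where e: "e > 0" "\<And>h. 0 < h \<Longrightarrow> h < e \<Longrightarrow> psi 0 < psi (0 + h)"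
    by auto
  define h where "h = min (e/2) 1"
  have h: "0 < h" "h < e" "h \<le> 1" using e by (auto simp: h_def)
  have "F ((1 - h) *\<^sub>R y + h *\<^sub>R x) \<le> (1 - h) * F y + h * F x"
    using h by (intro convex_onD[OF cv]) auto
  moreover have "(1 - h) *\<^sub>R y + h *\<^sub>R x = y + h *\<^sub>R dd" by (simp add: dd_def algebra_simps)
  ultimately have "psi h \<le> psi 0" by (simp add: psi_def c_def algebra_simps)
  with e(2)[OF h(1,2)] show False by simp
qed

lemma grad_zero:
  fixes f :: "'a::real_inner \<Rightarrow> real"
  assumes d: "\<And>z. GDERIV f z :> g z" and mn: "\<And>y. f a \<le> f y"
  shows "g a = 0"
proof -
  have "(g a) \<bullet> g (a + 0 *\<^sub>R g a) = 0"
    by (rule DERIV_local_min[OF dline[OF d, of a "g a" 0], of 1]) (use mn in auto)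
  then show ?thesis by simp
qed

theorem lemma9:
  fixes F :: "nat \<Rightarrow> nat \<Rightarrow> 'a::euclidean_space \<Rightarrow> real"
    and G :: "nat \<Rightarrow> nat \<Rightarrow> 'a \<Rightarrow> 'a"
    and M N C R :: nat
    and S :: "nat \<Rightarrow> nat \<Rightarrow> nat set"
    and \<pi> :: "nat \<Rightarrow> nat \<Rightarrow> nat \<Rightarrow> nat"
    and \<gamma> \<eta> L \<mu> \<theta> :: real
    and x0 xstar :: 'a
    and t :: nat
  defines "f \<equiv> (\<lambda>x. (1 / real M) * (\<Sum>m<M. (1 / real N) * (\<Sum>j<N. F m j x)))"
    and "gradf \<equiv> (\<lambda>x. (1 / real M) *\<^sub>R (\<Sum>m<M. (1 / real N) *\<^sub>R (\<Sum>j<N. G m j x)))"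
    and "xs \<equiv> rrcli \<gamma> \<eta> C R N G S \<pi> x0"
    and "xl \<equiv> (\<lambda>t r m j. loc_iter \<gamma> G (\<pi> t m) m (cohort_iter \<gamma> \<eta> C N G (S t) (\<pi> t) (rrcli \<gamma> \<eta> C R N G S \<pi> x0 t) r) j)"
  assumes N_pos: "N > 0" and C_pos: "C > 0" and R_pos: "R > 0"
    and M_def: "M = C * R"
    and step_pos: "\<gamma> > 0" "\<eta> > 0"
    and cohort_sub: "\<And>t r. r < R \<Longrightarrow> S t r \<subseteq> {..<M}"
    and cohort_card: "\<And>t r. r < R \<Longrightarrow> card (S t r) = C"
    and cohort_disj: "\<And>t r r'. r < R \<Longrightarrow> r' < R \<Longrightarrow> r \<noteq> r' \<Longrightarrow> S t r \<inter> S t r' = {}"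
    and cohort_cover: "\<And>t. (\<Union>r<R. S t r) = {..<M}"
    and perm: "\<And>t m. m < M \<Longrightarrow> bij_betw (\<pi> t m) {..<N} {..<N}"
    and grad: "\<And>m j x. m < M \<Longrightarrow> j < N \<Longrightarrow> GDERIV (F m j) x :> G m j x"
    and cvx: "\<And>m j. m < M \<Longrightarrow> j < N \<Longrightarrow> convex_on UNIV (F m j)"
    and smooth: "\<And>m j x y. m < M \<Longrightarrow> j < N \<Longrightarrow> norm (G m j x - G m j y) \<le> L * norm (x - y)"
    and mu_pos: "\<mu> > 0"
    and strong: "\<And>x y. gradf x \<bullet> (y - x) \<le> - (f x - f y + \<mu> / 2 * (norm (x - y))\<^sup>2)"
    and xstar_min: "\<And>y. f xstar \<le> f y"
    and theta_pos: "\<theta> > 0"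
  shows "- 2 * \<theta> * (((1 / real R) *\<^sub>R (\<Sum>r<R. (1 / real C) *\<^sub>R (\<Sum>m\<in>S t r.
              (1 / real N) *\<^sub>R (\<Sum>j<N. G m (\<pi> t m j) (xl t r m j))))) \<bullet> (xs t - xstar))
         \<le> - (\<theta> * \<mu> / 2) * (norm (xs t - xstar))\<^sup>2 - \<theta> * (f (xs t) - f xstar)
           + \<theta> * L * ((1 / (real R * real C * real N)) *
               (\<Sum>r<R. \<Sum>m\<in>S t r. \<Sum>j<N. (norm (xs t - xl t r m j))\<^sup>2))"
proof -
  define x where "x = xs t"
  define Y where "Y = xl t"
  have finS: "\<And>r. r < R \<Longrightarrow> finite (S t r)" using cohort_sub finite_subset by blast
  have memM: "\<And>r m. r < R \<Longrightarrow> m \<in> S t r \<Longrightarrow> m < M" using cohort_sub by blast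
  have piN: "\<And>m j. m < M \<Longrightarrow> j < N \<Longrightarrow> \<pi> t m j < N" using perm bij_betwE by blast
  have key: "- (G m i y \<bullet> (x - xstar)) \<le> F m i xstar - F m i x + L / 2 * (norm (x - y))\<^sup>2"
    if "m < M" "i < N" for m i y
  proof -
    have "F m i y + G m i y \<bullet> (xstar - y) \<le> F m i xstar"
      by (rule tangent[OF grad cvx]) (use that in auto)
    moreover have "F m i x \<le> F m i y + G m i y \<bullet> (x - y) + L / 2 * (norm (x - y))\<^sup>2"
      by (rule descent[OF grad smooth]) (use that in auto)
    ultimately show ?thesis by (simp add: inner_diff_right)
  qed
  define Q where "Q = (\<Sum>r<R. \<Sum>m\<in>S t r. \<Sum>j<N. (norm (x - Y r m j))\<^sup>2)"
  define T where "T = (\<Sum>r<R. \<Sum>m\<in>S t r. \<Sum>j<N. G m (\<pi> t m j) (Y r m j) \<bullet> (x - xstar))"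
  define D where "D = (\<Sum>m<M. \<Sum>i<N. F m i xstar - F m i x)"
  have lhs: "((1 / real R) *\<^sub>R (\<Sum>r<R. (1 / real C) *\<^sub>R (\<Sum>m\<in>S t r.
              (1 / real N) *\<^sub>R (\<Sum>j<N. G m (\<pi> t m j) (Y r m j))))) \<bullet> (x - xstar)
        = T / (real R * real C * real N)"
    by (simp add: T_def inner_sum_left sum_distrib_left sum_divide_distrib mult.assoc)
  have reidx: "(\<Sum>r<R. \<Sum>m\<in>S t r. \<Sum>j<N. F m (\<pi> t m j) xstar - F m (\<pi> t m j) x) = D"
  proof -
    have "(\<Sum>r<R. \<Sum>m\<in>S t r. \<Sum>j<N. F m (\<pi> t m j) xstar - F m (\<pi> t m j) x)
        = (\<Sum>r<R. \<Sum>m\<in>S t r. \<Sum>i<N. F m i xstar - F m i x)"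
    proof (rule sum.cong[OF refl], rule sum.cong[OF refl])
      fix r m assume "r \<in> {..<R}" "m \<in> S t r"
      then have "m < M" using memM by auto
      show "(\<Sum>j<N. F m (\<pi> t m j) xstar - F m (\<pi> t m j) x) = (\<Sum>i<N. F m i xstar - F m i x)"
        using sum.reindex_bij_betw[OF perm[OF \<open>m < M\<close>, of t], of "\<lambda>i. F m i xstar - F m i x"] by simp
    qed
    also have "\<dots> = (\<Sum>m\<in>(\<Union>r<R. S t r). \<Sum>i<N. F m i xstar - F m i x)"
      by (rule sum.UNION_disjoint[symmetric]) (use finS cohort_disj in auto)
    finally show ?thesis unfolding cohort_cover D_def .
  qed
  have TD: "- T \<le> D + L / 2 * Q"
  proof -
    have "- T = (\<Sum>r<R. \<Sum>m\<in>S t r. \<Sum>j<N. - (G m (\<pi> t m j) (Y r m j) \<bullet> (x - xstar)))"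
      by (simp add: T_def sum_negf)
    also have "\<dots> \<le> (\<Sum>r<R. \<Sum>m\<in>S t r. \<Sum>j<N. (F m (\<pi> t m j) xstar - F m (\<pi> t m j) x) + L / 2 * (norm (x - Y r m j))\<^sup>2)"
      by (intro sum_mono key) (use memM piN in auto)
    also have "\<dots> = D + L / 2 * Q"
      by (simp add: sum.distrib reidx[symmetric] Q_def sum_distrib_left)
    finally show ?thesis .
  qed
  have fz: "f z = (\<Sum>m<M. \<Sum>i<N. F m i z) / (real M * real N)" for z
    by (simp add: f_def sum_distrib_left sum_divide_distrib)
  have fD: "f xstar - f x = D / (real M * real N)"
    unfolding fz D_def sum_subtractf diff_divide_distrib ..
  have gradf_d: "GDERIV f z :> gradf z" for z
  proof -
    have "(f has_derivative (\<lambda>h. (1 / real M) * (\<Sum>m<M. (1 / real N) * (\<Sum>j<N. h \<bullet> G m j z)))) (at z)"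
      unfolding f_def
      by (intro has_derivative_mult_right has_derivative_sum) (use grad[unfolded gderiv_def] in auto)
    then show ?thesis unfolding gderiv_def
      by (rule has_derivative_eq_rhs) (simp add: fun_eq_iff gradf_def inner_sum_right)
  qed
  have g0: "gradf xstar = 0" by (rule grad_zero[OF gradf_d xstar_min])
  have sc: "f x - f xstar \<ge> \<mu> / 2 * (norm (x - xstar))\<^sup>2"
    using strong[of xstar x] g0 by (simp add: norm_minus_commute)
  have RCN: "real R * real C * real N = real M * real N" using M_def by simp
  have pos: "real R * real C * real N > 0" using N_pos C_pos R_pos by simp
  have "- 2 * \<theta> * (T / (real R * real C * real N)) = 2 * \<theta> * (- T / (real M * real N))"
    using RCN by simp
  also have "\<dots> \<le> 2 * \<theta> * ((D + L / 2 * Q) / (real M * real N))"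
    using TD pos RCN theta_pos by (intro mult_left_mono divide_right_mono) auto
  also have "\<dots> = 2 * \<theta> * (f xstar - f x) + \<theta> * L * (Q / (real R * real C * real N))"
    using fD RCN M_def by (simp add: add_divide_distrib algebra_simps)
  also have "\<dots> \<le> - (\<theta> * \<mu> / 2) * (norm (x - xstar))\<^sup>2 - \<theta> * (f x - f xstar) + \<theta> * L * (Q / (real R * real C * real N))"
    using sc theta_pos mult_left_mono[OF sc, of \<theta>] by (simp add: algebra_simps)
  finally show ?thesis using lhs unfolding x_def Y_def Q_def by simp
qed

end
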